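(* Let $\epsilon>0$. The weighted cycle augmentation problem admits a one-pass $(2+\epsilon)$-approximation streaming algorithm whose total memory is $O\!\left(\frac{n}{\epsilon}\log\min(W,n)\right)$ edges.
   Context: Weighted cycle augmentation problem: given a cycle $C$ on vertex set $V=\{0,1,\dots,n-1\}$ (edges $(i-1,i)$, indices mod $n$), which is known in advance, and a set of links $L\subseteq\binom{V}{2}$ with weights $w:L\to\{0,1,\dots,W\}$ that arrive one by one in an arbitrary order in a stream, find a minimum-weight subset $S\subseteq L$ such that $(V,C\cup S)$ is $3$-edge-connected. A $(2+\epsilon)$-approximation outputs a feasible $S$ of weight at most $(2+\epsilon)$ times the optimum. *)

theory Defs
  imports Complex_Main
begin

text \<open>Vertices are 0..n-1; cycle edges are (i, (i+1) mod n). A link is a pair (u,v) with u < v < n.\<close>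

definition is_link :: "nat \<Rightarrow> nat \<times> nat \<Rightarrow> bool" where
  "is_link n e \<longleftrightarrow> fst e < snd e \<and> snd e < n"

definition cut_size :: "nat \<Rightarrow> (nat \<times> nat) set \<Rightarrow> nat set \<Rightarrow> nat" where
  "cut_size n S X =
     card {i. i < n \<and> ((i \<in> X) \<noteq> ((i + 1) mod n \<in> X))}
   + card {e \<in> S. (fst e \<in> X) \<noteq> (snd e \<in> X)}"

definition three_edge_connected :: "nat \<Rightarrow> (nat \<times> nat) set \<Rightarrow> bool" where
  "three_edge_connected n S \<longleftrightarrow>
     (\<forall>X. X \<subseteq> {..<n} \<and> X \<noteq> {} \<and> X \<noteq> {..<n} \<longrightarrow> cut_size n S X \<ge> 3)"

definition feasible_aug :: "nat \<Rightarrow> (nat \<times> nat) set \<Rightarrow> (nat \<times> nat) set \<Rightarrow> bool" where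
  "feasible_aug n L S \<longleftrightarrow> S \<subseteq> L \<and> three_edge_connected n S"

definition weight :: "(nat \<times> nat \<Rightarrow> nat) \<Rightarrow> (nat \<times> nat) set \<Rightarrow> nat" where
  "weight w S = (\<Sum>e\<in>S. w e)"

definition opt_aug :: "nat \<Rightarrow> (nat \<times> nat) set \<Rightarrow> (nat \<times> nat \<Rightarrow> nat) \<Rightarrow> nat" where
  "opt_aug n L w = Min (weight w ` {S. feasible_aug n L S})"

text \<open>Running a one-pass streaming algorithm (state = list of machine words) on a prefix
  of the stream; each arriving item is (u, v, w(u,v)).\<close>
definition run_stream ::
  "(nat list \<Rightarrow> nat \<times> nat \<times> nat \<Rightarrow> nat list) \<Rightarrow> nat list \<Rightarrow> (nat \<times> nat \<Rightarrow> nat)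
     \<Rightarrow> (nat \<times> nat) list \<Rightarrow> nat list" where
  "run_stream step init w xs = fold (\<lambda>e s. step s (fst e, snd e, w e)) xs init"

end

theory Submission
  imports Defs "HOL-Library.FuncSet"
begin


definition cyc :: "nat \<Rightarrow> nat set \<Rightarrow> nat set" where
  "cyc n X = {i. i < n \<and> ((i \<in> X) \<noteq> ((i + 1) mod n \<in> X))}"

lemma cut_size_alt: "cut_size n S X = card (cyc n X) + card {e \<in> S. (fst e \<in> X) \<noteq> (snd e \<in> X)}"
  unfolding cut_size_def cyc_def by simp

lemma finite_cyc[simp]: "finite (cyc n X)" unfolding cyc_def by simp

lemma cut_compl:
  assumes n: "n \<ge> 1" and S: "\<forall>e\<in>S. fst e < n \<and> snd e < n"
  shows "cut_size n S ({..<n} - X) = cut_size n S X"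
proof -
  have "cyc n ({..<n} - X) = cyc n X"
    unfolding cyc_def using n by auto
  moreover have "{e \<in> S. (fst e \<in> {..<n} - X) \<noteq> (snd e \<in> {..<n} - X)} = {e \<in> S. (fst e \<in> X) \<noteq> (snd e \<in> X)}"
    using S by auto
  ultimately show ?thesis unfolding cut_size_alt by simp
qed

lemma transition:
  assumes "a \<in> X" "c \<notin> X" "a < c"
  shows "\<exists>i. a \<le> i \<and> i < c \<and> i \<in> X \<and> Suc i \<notin> X"
  using assms
proof (induction c rule: nat_less_induct)
  case (1 c)
  then obtain c' where c: "c = Suc c'" by (cases c) auto
  show ?case
  proof (cases "c' \<in> X")
    case True then show ?thesis using c 1 by (intro exI[of _ c']) auto
  next
    case False
    then have "c' \<noteq> a" using 1 by auto
    then have "a < c'" using 1 c by auto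
    then obtain i where "a \<le> i \<and> i < c' \<and> i \<in> X \<and> Suc i \<notin> X"
      using 1 False c by blast
    then show ?thesis using c by auto
  qed
qed

lemma arc_or_big:
  assumes n: "n \<ge> 1" and X: "X \<subseteq> {..<n}" "X \<noteq> {}" "0 \<notin> X"
  shows "card (cyc n X) \<ge> 3 \<or> (\<exists>a b. X = {a..b} \<and> 1 \<le> a \<and> a \<le> b \<and> b < n \<and> card (cyc n X) \<le> 2)"
proof -
  have fX: "finite X" using X finite_subset by blast
  define a where "a = Min X"
  define b where "b = Max X"
  have aX: "a \<in> X" and bX: "b \<in> X" using fX X a_def b_def by auto
  have a1: "a \<ge> 1" using aX X by (cases a) auto
  have bn: "b < n" using bX X by auto
  have ab: "a \<le> b" using fX X a_def b_def by simp
  have amin: "\<And>x. x \<in> X \<Longrightarrow> a \<le> x" using fX a_def by simp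
  have bmax: "\<And>x. x \<in> X \<Longrightarrow> x \<le> b" using fX b_def by simp
  have c1: "a - 1 \<in> cyc n X"
  proof -
    have "a - 1 \<notin> X"
    proof
      assume "a - 1 \<in> X" then have "a \<le> a - 1" by (rule amin)
      then show False using a1 by simp
    qed
    moreover have "(a - 1 + 1) mod n = a" using a1 ab bn by simp
    ultimately show ?thesis unfolding cyc_def using aX a1 bn ab by auto
  qed
  have c2: "b \<in> cyc n X"
  proof -
    have "(b + 1) mod n \<notin> X"
    proof (cases "b + 1 < n")
      case True then show ?thesis using bmax by (simp; fastforce)
    next
      case False then have "b + 1 = n" using bn by simp
      then show ?thesis using X by simp
    qed
    then show ?thesis unfolding cyc_def using bX bn by auto
  qed
  have neq: "a - 1 \<noteq> b" using a1 ab by simp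
  show ?thesis
  proof (cases "X = {a..b}")
    case True
    have "cyc n X \<subseteq> {a - 1, b}"
    proof
      fix i assume i: "i \<in> cyc n X"
      then have "i < n" and ch: "(i \<in> X) \<noteq> ((i + 1) mod n \<in> X)" unfolding cyc_def by auto
      show "i \<in> {a - 1, b}"
      proof (rule ccontr)
        assume "i \<notin> {a - 1, b}"
        then have "i \<noteq> a - 1" "i \<noteq> b" by auto
        show False
        proof (cases "i + 1 < n")
          case True then show ?thesis using ch True \<open>i \<noteq> a - 1\<close> \<open>i \<noteq> b\<close> a1 by (auto simp: \<open>X = {a..b}\<close>)
        next
          case False then have "i = n - 1" using \<open>i < n\<close> by simp
          then show ?thesis using ch \<open>i < n\<close> \<open>i \<noteq> b\<close> bn a1 by (auto simp: \<open>X = {a..b}\<close>)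
        qed
      qed
    qed
    then have "card (cyc n X) \<le> 2" by (metis card_2_iff card_mono finite.emptyI finite.insertI le_trans card_insert_le card_Suc_eq numeral_2_eq_2 neq)
    then show ?thesis using True a1 ab bn by blast
  next
    case False
    have "\<not> {a..b} \<subseteq> X" using False amin bmax by auto
    then obtain c where cnX: "c \<notin> X" "a \<le> c" "c \<le> b" using atLeastAtMost_iff subsetI by blast
    then have ac: "a < c" "c < b" using aX bX by (auto simp: order.order_iff_strict)
    obtain i where i: "a \<le> i" "i < c" "i \<in> X" "Suc i \<notin> X" using transition[OF aX cnX(1) ac(1)] by blast
    have "i \<in> cyc n X" unfolding cyc_def using i ac bn by auto
    moreover have "i \<noteq> a - 1" "i \<noteq> b" using i ac a1 by auto
    ultimately have "{a - 1, b, i} \<subseteq> cyc n X" using c1 c2 by auto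
    then have "card {a - 1, b, i} \<le> card (cyc n X)" by (simp add: card_mono)
    moreover have "card {a - 1, b, i} = 3" using neq \<open>i \<noteq> a - 1\<close> \<open>i \<noteq> b\<close> by auto
    ultimately show ?thesis by simp
  qed
qed

lemma replace_core:
  assumes n: "n \<ge> 1" and X: "X \<subseteq> {..<n}" "X \<noteq> {}" "0 \<notin> X"
  and fin: "finite S'"
  and Sv: "\<forall>e\<in>S. fst e < snd e"
  and r1: "\<forall>e\<in>S. \<exists>v'. (fst e, v') \<in> S' \<and> snd e \<le> v'"
  and r2: "\<forall>e\<in>S. \<exists>u'. (u', snd e) \<in> S' \<and> u' \<le> fst e"
  and cs: "cut_size n S X \<ge> 3"
  shows "cut_size n S' X \<ge> 3"
proof -
  from arc_or_big[OF n X] show ?thesis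
  proof
    assume "card (cyc n X) \<ge> 3" then show ?thesis unfolding cut_size_alt by simp
  next
    assume "\<exists>a b. X = {a..b} \<and> 1 \<le> a \<and> a \<le> b \<and> b < n \<and> card (cyc n X) \<le> 2"
    then obtain a b where ab: "X = {a..b}" "1 \<le> a" "a \<le> b" "b < n" "card (cyc n X) \<le> 2" by blast
    have "card {e \<in> S. (fst e \<in> X) \<noteq> (snd e \<in> X)} \<noteq> 0" using cs ab(5) unfolding cut_size_alt by linarith
    then have "{e \<in> S. (fst e \<in> X) \<noteq> (snd e \<in> X)} \<noteq> {}" by (metis card.empty)
    then obtain e where e: "e \<in> S" "(fst e \<in> X) \<noteq> (snd e \<in> X)" by blast
    have "\<exists>e'\<in>S'. (fst e' \<in> X) \<noteq> (snd e' \<in> X)"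
    proof (cases "fst e \<in> X")
      case True
      then have "snd e > b" using e Sv ab(1) by auto
      obtain v' where "(fst e, v') \<in> S'" "snd e \<le> v'" using r1 e by blast
      then show ?thesis using True \<open>snd e > b\<close> ab(1) by (intro bexI[of _ "(fst e, v')"]) auto
    next
      case False
      then have "snd e \<in> X" using e by simp
      then have "fst e < a" using e Sv ab(1) False by auto
      obtain u' where "(u', snd e) \<in> S'" "u' \<le> fst e" using r2 e by blast
      then show ?thesis using \<open>snd e \<in> X\<close> \<open>fst e < a\<close> ab(1) by (intro bexI[of _ "(u', snd e)"]) auto
    qed
    then have "{e \<in> S'. (fst e \<in> X) \<noteq> (snd e \<in> X)} \<noteq> {}" by blast
    moreover have "finite {e \<in> S'. (fst e \<in> X) \<noteq> (snd e \<in> X)}" using fin by simp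
    ultimately have "card {e \<in> S'. (fst e \<in> X) \<noteq> (snd e \<in> X)} \<ge> 1"
      by (simp add: Suc_leI card_gt_0_iff)
    moreover have "card (cyc n X) \<ge> 2"
    proof -
      have "a - 1 \<in> cyc n X" unfolding cyc_def using ab by auto
      moreover have "b \<in> cyc n X"
      proof (cases "b + 1 < n")
        case True then show ?thesis unfolding cyc_def using ab by simp
      next
        case False then have "b + 1 = n" using ab by simp
        then show ?thesis unfolding cyc_def using ab by simp
      qed
      ultimately have "{a - 1, b} \<subseteq> cyc n X" by auto
      then have "card {a - 1, b} \<le> card (cyc n X)" by (simp add: card_mono)
      moreover have "card {a - 1, b} = 2" using ab by auto
      ultimately show ?thesis by simp
    qed
    ultimately show ?thesis unfolding cut_size_alt by simp
  qed
qed

lemma replace_3ec: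
  assumes n: "n \<ge> 1" and S: "three_edge_connected n S"
  and fin: "finite S'"
  and Sv: "\<forall>e\<in>S. fst e < snd e \<and> snd e < n" and S'v: "\<forall>e\<in>S'. fst e < n \<and> snd e < n"
  and r1: "\<forall>e\<in>S. \<exists>v'. (fst e, v') \<in> S' \<and> snd e \<le> v'"
  and r2: "\<forall>e\<in>S. \<exists>u'. (u', snd e) \<in> S' \<and> u' \<le> fst e"
  shows "three_edge_connected n S'"
  unfolding three_edge_connected_def
proof (intro allI impI)
  fix X assume X: "X \<subseteq> {..<n} \<and> X \<noteq> {} \<and> X \<noteq> {..<n}"
  have Sv': "\<forall>e\<in>S. fst e < snd e" using Sv by auto
  have Svv: "\<forall>e\<in>S. fst e < n \<and> snd e < n" using Sv by auto
  show "cut_size n S' X \<ge> 3"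
  proof (cases "0 \<in> X")
    case False
    have "cut_size n S X \<ge> 3" using S X unfolding three_edge_connected_def by blast
    then show ?thesis using replace_core[OF n _ _ False fin Sv' r1 r2] X by blast
  next
    case True
    define Y where "Y = {..<n} - X"
    have Y: "Y \<subseteq> {..<n}" "Y \<noteq> {}" "0 \<notin> Y" "Y \<noteq> {..<n}" using X True Y_def by auto
    have "cut_size n S Y \<ge> 3" using S Y unfolding three_edge_connected_def by blast
    then have "cut_size n S' Y \<ge> 3" using replace_core[OF n Y(1,2,3) fin Sv' r1 r2] by blast
    moreover have "cut_size n S' Y = cut_size n S' X" unfolding Y_def by (rule cut_compl[OF n S'v])
    ultimately show ?thesis by simp
  qed
qed



definition cls :: "real \<Rightarrow> nat \<Rightarrow> nat" where
  "cls \<rho> w = (if w = 0 then 0 else Suc (LEAST j. real w \<le> \<rho> ^ j))"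

definition ubc :: "real \<Rightarrow> nat \<Rightarrow> real" where
  "ubc \<rho> j = (if j = 0 then 0 else \<rho> ^ (j - 1))"

lemma ubc_nonneg: "\<rho> > 1 \<Longrightarrow> ubc \<rho> j \<ge> 0"
  unfolding ubc_def by auto

lemma cls_props:
  assumes r: "\<rho> > 1"
  shows "real w \<le> ubc \<rho> (cls \<rho> w) \<and> ubc \<rho> (cls \<rho> w) \<le> \<rho> * real w"
proof (cases "w = 0")
  case True then show ?thesis unfolding cls_def ubc_def by simp
next
  case False
  define c where "c = (LEAST j. real w \<le> \<rho> ^ j)"
  obtain j0 where "real w < \<rho> ^ j0" using real_arch_pow[OF r] by blast
  then have ex: "real w \<le> \<rho> ^ j0" by simp
  have c1: "real w \<le> \<rho> ^ c" unfolding c_def by (rule LeastI[of _ j0], rule ex)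
  have u: "ubc \<rho> (cls \<rho> w) = \<rho> ^ c" unfolding cls_def ubc_def c_def using False by simp
  have "\<rho> ^ c \<le> \<rho> * real w"
  proof (cases c)
    case 0
    have w1: "1 \<le> real w" using False by simp
    have "1 * 1 \<le> \<rho> * real w" using r w1 by (intro mult_mono) auto
    then show ?thesis using 0 by simp
  next
    case (Suc c')
    have "\<not> real w \<le> \<rho> ^ c'" using not_less_Least[of c' "\<lambda>j. real w \<le> \<rho> ^ j"] Suc c_def by simp
    then show ?thesis using Suc r by simp
  qed
  then show ?thesis using u c1 by simp
qed

lemma cls_bound:
  assumes r: "\<rho> > 1" and w: "w \<le> W"
  shows "cls \<rho> w < nat \<lceil>ln (real W) / ln \<rho>\<rceil> + 2"
proof (cases "w = 0")
  case True then show ?thesis unfolding cls_def by simp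
next
  case False
  define j0 where "j0 = nat \<lceil>ln (real W) / ln \<rho>\<rceil>"
  have W1: "real W \<ge> 1" using False w by simp
  have lr: "ln \<rho> > 0" using r by simp
  have "ln (real W) / ln \<rho> \<le> real j0" unfolding j0_def by linarith
  then have "ln (real W) \<le> real j0 * ln \<rho>" using lr by (simp add: divide_le_eq)
  also have "\<dots> = ln (\<rho> ^ j0)" using r by (simp add: ln_realpow)
  finally have "real W \<le> \<rho> ^ j0" using W1 r by (subst (asm) ln_le_cancel_iff) auto
  then have "real w \<le> \<rho> ^ j0" using w by (meson of_nat_le_iff order_trans)
  then have "(LEAST j. real w \<le> \<rho> ^ j) \<le> j0" by (rule Least_le)
  then show ?thesis unfolding cls_def j0_def using False by simp
qed

lemma ln_rho_lower:
  fixes \<epsilon> :: real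
  assumes "0 < \<epsilon>" "\<epsilon> \<le> 1"
  shows "ln (1 + \<epsilon>/2) \<ge> \<epsilon>/4"
proof -
  have "\<epsilon>/2 - (\<epsilon>/2)^2 \<le> ln (1 + \<epsilon>/2)" using assms by (intro ln_one_plus_pos_lower_bound) auto
  moreover have "\<epsilon>/4 \<le> \<epsilon>/2 - (\<epsilon>/2)^2" 
  proof -
    have "\<epsilon> * \<epsilon> \<le> \<epsilon> * 1" using assms by (intro mult_left_mono) auto
    then show ?thesis by (simp add: power2_eq_square)
  qed
  ultimately show ?thesis by linarith
qed

lemma key_prod:
  fixes n W :: nat
  shows "ln (real W) * ln (real n + 1) \<le> ln (real (min W n) + 2) * ln (real n + real W + 2)"
proof (cases "W = 0")
  case True then show ?thesis by simp
next
  case False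
  then have W1: "real W \<ge> 1" by simp
  show ?thesis
  proof (cases "W \<le> n")
    case True
    have "ln (real W) \<le> ln (real (min W n) + 2)" using True W1 by simp
    moreover have "ln (real n + 1) \<le> ln (real n + real W + 2)" by simp
    ultimately show ?thesis using W1 by (intro mult_mono) auto
  next
    case False
    have "ln (real W) \<le> ln (real n + real W + 2)" using W1 by simp
    moreover have "ln (real n + 1) \<le> ln (real (min W n) + 2)" using False by simp
    ultimately show ?thesis using W1 by (subst mult.commute, intro mult_mono) auto
  qed
qed

lemma mem_bound:
  fixes n W :: nat and \<epsilon> :: real
  assumes e: "0 < \<epsilon>" "\<epsilon> \<le> 1" and n: "n \<ge> 3"
  defines "L \<equiv> nat \<lceil>ln (real W) / ln (1 + \<epsilon>/2)\<rceil> + 2"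
  defines "r \<equiv> nat \<lceil>2 * real n * real L * ln (real n + 1) / ln (real n + real W + 2)\<rceil>"
  shows "real r \<le> 15 * real n / \<epsilon> * log 2 (real (min W n) + 2)"
    and "(n + 1) ^ (2 * n * L) \<le> (n + W + 2) ^ r"
proof -
  define lw where "lw = ln (real W)"
  have lw0: "lw \<ge> 0" unfolding lw_def by (cases "W = 0") auto
  have lr: "ln (1 + \<epsilon>/2) \<ge> \<epsilon>/4" by (rule ln_rho_lower[OF e])
  have lrp: "ln (1 + \<epsilon>/2) > 0" using e by simp
  have "lw / ln (1 + \<epsilon>/2) \<le> lw / (\<epsilon>/4)"
    using lw0 lr e by (intro divide_left_mono) auto
  moreover have "real_of_int \<lceil>lw / ln (1 + \<epsilon>/2)\<rceil> \<le> lw / ln (1 + \<epsilon>/2) + 1"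
    by (rule of_int_ceiling_le_add_one)
  moreover have "lw / ln (1 + \<epsilon>/2) \<ge> 0" using lw0 lrp by simp
  moreover have "real L = real_of_int \<lceil>lw / ln (1 + \<epsilon>/2)\<rceil> + 2"
  proof -
    have "lw / ln (1 + \<epsilon>/2) \<ge> 0" using lw0 lrp by simp
    then have "\<lceil>lw / ln (1 + \<epsilon>/2)\<rceil> \<ge> 0" by linarith
    then show ?thesis unfolding L_def lw_def by simp
  qed
  moreover have "lw / (\<epsilon>/4) = 4 * lw / \<epsilon>" by simp
  ultimately have Lb: "real L \<le> 4 * lw / \<epsilon> + 3" by (smt (verit))
  have ln1: "ln (real n + 1) > 0" using n by simp
  have ln2: "ln (real n + real W + 2) > 0" using n by simp
  have rat: "ln (real n + 1) / ln (real n + real W + 2) \<le> 1" using ln1 ln2 by simp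
  define m where "m = real (min W n) + 2"
  have lm: "ln m \<ge> 0" unfolding m_def by simp
  have kp: "lw * ln (real n + 1) \<le> ln m * ln (real n + real W + 2)"
    unfolding lw_def m_def by (rule key_prod)
  have kp2: "lw * (ln (real n + 1) / ln (real n + real W + 2)) \<le> ln m"
    using kp ln2 by (simp add: divide_le_eq mult.commute)
  define q where "q = ln (real n + 1) / ln (real n + real W + 2)"
  have q0: "q \<ge> 0" "q \<le> 1" unfolding q_def using rat ln1 ln2 by auto
  have "2 * real n * real L * ln (real n + 1) / ln (real n + real W + 2) = 2 * real n * real L * q"
    unfolding q_def by simp
  also have "\<dots> \<le> 2 * real n * (4 * lw / \<epsilon> + 3) * q"
    using Lb q0 by (intro mult_right_mono mult_left_mono) auto
  also have "\<dots> = 8 * real n * (lw * q) / \<epsilon> + 6 * real n * q" using e by (simp add: field_simps)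
  also have "\<dots> \<le> 8 * real n * ln m / \<epsilon> + 6 * real n"
    using kp2 q0 e unfolding q_def[symmetric]
    by (intro add_mono divide_right_mono mult_left_mono) (auto simp: mult_left_le)
  finally have rb0: "2 * real n * real L * ln (real n + 1) / ln (real n + real W + 2) \<le> 8 * real n * ln m / \<epsilon> + 6 * real n" .
  have "real r \<le> 2 * real n * real L * ln (real n + 1) / ln (real n + real W + 2) + 1"
    unfolding r_def by (simp add: of_nat_nat)
  also have "\<dots> \<le> 8 * real n * ln m / \<epsilon> + 7 * real n" using rb0 n by simp
  also have "\<dots> \<le> 15 * real n / \<epsilon> * log 2 m"
  proof -
    have lg1: "log 2 m \<ge> 1" unfolding m_def by simp
    have "ln m \<le> log 2 m"
    proof -
      have "log 2 m = ln m / ln 2" by (simp add: log_def)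
      moreover have "ln 2 \<le> (1::real)" using ln_2_less_1 by simp
      moreover have "ln (2::real) > 0" by simp
      ultimately show ?thesis using lm by (simp add: le_divide_eq) (metis mult_left_le lm)
    qed
    then have a: "8 * real n * ln m / \<epsilon> \<le> 8 * real n * log 2 m / \<epsilon>"
      using e by (intro divide_right_mono mult_left_mono) auto
    have "7 * real n \<le> 7 * real n * log 2 m / \<epsilon>"
    proof -
      have "1 \<le> log 2 m / \<epsilon>" using lg1 e by (simp add: le_divide_eq)
      then show ?thesis using mult_left_mono[of 1 "log 2 m / \<epsilon>" "7 * real n"] by simp
    qed
    with a have "8 * real n * ln m / \<epsilon> + 7 * real n \<le> 8 * real n * log 2 m / \<epsilon> + 7 * real n * log 2 m / \<epsilon>" by linarith
    also have "\<dots> = 15 * real n / \<epsilon> * log 2 m" by (simp add: field_simps)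
    finally show ?thesis .
  qed
  finally show "real r \<le> 15 * real n / \<epsilon> * log 2 (real (min W n) + 2)" unfolding m_def .
  have "real (2 * n * L) * ln (real n + 1) \<le> real r * ln (real n + real W + 2)"
  proof -
    have "2 * real n * real L * ln (real n + 1) / ln (real n + real W + 2) \<le> real r"
      unfolding r_def by (simp add: of_nat_nat)
    then show ?thesis using ln2 by (simp add: divide_le_eq)
  qed
  then have "ln (real ((n + 1) ^ (2 * n * L))) \<le> ln (real ((n + W + 2) ^ r))"
    by (simp add: ln_realpow add.commute add.left_commute)
  then have "real ((n + 1) ^ (2 * n * L)) \<le> real ((n + W + 2) ^ r)"
    by (subst (asm) ln_le_cancel_iff) auto
  then show "(n + 1) ^ (2 * n * L) \<le> (n + W + 2) ^ r" by linarith
qed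



definition D3 :: "nat \<Rightarrow> nat \<Rightarrow> (nat \<times> nat \<times> nat) set" where
  "D3 n L = {0, 1} \<times> {..<n} \<times> {..<L}"

definition upd :: "nat \<Rightarrow> nat \<Rightarrow> real \<Rightarrow> (nat \<times> nat \<times> nat \<Rightarrow> nat) \<Rightarrow> nat \<times> nat \<times> nat
    \<Rightarrow> (nat \<times> nat \<times> nat \<Rightarrow> nat)" where
  "upd n L \<rho> T x = (case x of (u, v, wt) \<Rightarrow> restrict (\<lambda>(t, i, j).
     if t = 0 \<and> i = u \<and> j = cls \<rho> wt then max (T (t, i, j)) (min n (Suc v))
     else if t = 1 \<and> i = v \<and> j = cls \<rho> wt then max (T (t, i, j)) (n - u) else T (t, i, j)) (D3 n L))"

definition T0 :: "nat \<Rightarrow> nat \<Rightarrow> nat \<times> nat \<times> nat \<Rightarrow> nat" where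
  "T0 n L = restrict (\<lambda>_. 0) (D3 n L)"

definition tab :: "nat \<Rightarrow> nat \<Rightarrow> real \<Rightarrow> (nat \<times> nat \<Rightarrow> nat) \<Rightarrow> (nat \<times> nat) list \<Rightarrow> nat \<times> nat \<times> nat \<Rightarrow> nat" where
  "tab n L \<rho> w xs = fold (\<lambda>e T. upd n L \<rho> T (fst e, snd e, w e)) xs (T0 n L)"

lemma tab_Nil: "tab n L \<rho> w [] = T0 n L" unfolding tab_def by simp

lemma tab_snoc: "tab n L \<rho> w (xs @ [x]) = upd n L \<rho> (tab n L \<rho> w xs) (fst x, snd x, w x)"
  unfolding tab_def by simp

lemma upd_apply:
  assumes "(t, i, j) \<in> D3 n L"
  shows "upd n L \<rho> T (u, v, wt) (t, i, j) =
    (if t = 0 \<and> i = u \<and> j = cls \<rho> wt then max (T (t, i, j)) (min n (Suc v))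
     else if t = 1 \<and> i = v \<and> j = cls \<rho> wt then max (T (t, i, j)) (n - u) else T (t, i, j))"
  using assms unfolding upd_def by simp

lemma upd_PiE:
  assumes "T \<in> PiE (D3 n L) (\<lambda>_. {..n})"
  shows "upd n L \<rho> T x \<in> PiE (D3 n L) (\<lambda>_. {..n})"
proof -
  obtain u v wt where x: "x = (u, v, wt)" by (cases x) auto
  have "\<forall>p\<in>D3 n L. T p \<le> n" using assms by auto
  then show ?thesis unfolding x upd_def by (auto simp: restrict_PiE_iff)
qed

lemma T0_PiE: "T0 n L \<in> PiE (D3 n L) (\<lambda>_. {..n})"
  unfolding T0_def by (auto simp: restrict_PiE_iff)

lemma tab_PiE: "tab n L \<rho> w xs \<in> PiE (D3 n L) (\<lambda>_. {..n})"
  by (induction xs rule: rev_induct) (auto simp: tab_Nil tab_snoc T0_PiE upd_PiE)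

definition valid :: "nat \<Rightarrow> nat \<Rightarrow> real \<Rightarrow> (nat \<times> nat \<Rightarrow> nat) \<Rightarrow> (nat \<times> nat) list \<Rightarrow> bool" where
  "valid n L \<rho> w xs \<longleftrightarrow> (\<forall>e\<in>set xs. fst e < snd e \<and> snd e < n \<and> cls \<rho> (w e) < L)"

definition inv1 where
  "inv1 n L \<rho> w xs T \<longleftrightarrow> (\<forall>i j. i < n \<longrightarrow> j < L \<longrightarrow> 0 < T (0, i, j) \<longrightarrow>
      (i, T (0, i, j) - 1) \<in> set xs \<and> cls \<rho> (w (i, T (0, i, j) - 1)) = j)"
definition inv2 where
  "inv2 n L \<rho> w xs T \<longleftrightarrow> (\<forall>i j. i < n \<longrightarrow> j < L \<longrightarrow> 0 < T (1, i, j) \<longrightarrow>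
      (n - T (1, i, j), i) \<in> set xs \<and> cls \<rho> (w (n - T (1, i, j), i)) = j)"
definition inv3 where
  "inv3 n \<rho> w xs T \<longleftrightarrow> (\<forall>e\<in>set xs. Suc (snd e) \<le> T (0, fst e, cls \<rho> (w e)) \<and> n - fst e \<le> T (1, snd e, cls \<rho> (w e)))"

lemma tab_inv:
  assumes "valid n L \<rho> w xs"
  shows "inv1 n L \<rho> w xs (tab n L \<rho> w xs) \<and> inv2 n L \<rho> w xs (tab n L \<rho> w xs) \<and> inv3 n \<rho> w xs (tab n L \<rho> w xs)"
  using assms
proof (induction xs rule: rev_induct)
  case Nil
  show ?case unfolding inv1_def inv2_def inv3_def tab_Nil T0_def D3_def by auto
next
  case (snoc x xs)
  obtain u v where x: "x = (u, v)" by (cases x) auto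
  define c where "c = cls \<rho> (w x)"
  have vx: "u < v" "v < n" "c < L" using snoc.prems unfolding valid_def x c_def by auto
  have vxs: "valid n L \<rho> w xs" using snoc.prems unfolding valid_def by auto
  define T where "T = tab n L \<rho> w xs"
  have IH: "inv1 n L \<rho> w xs T" "inv2 n L \<rho> w xs T" "inv3 n \<rho> w xs T"
    using snoc.IH[OF vxs] T_def by auto
  define T' where "T' = tab n L \<rho> w (xs @ [x])"
  have T'eq: "\<And>t i j. (t, i, j) \<in> D3 n L \<Longrightarrow> T' (t, i, j) =
    (if t = 0 \<and> i = u \<and> j = c then max (T (t, i, j)) (Suc v)
     else if t = 1 \<and> i = v \<and> j = c then max (T (t, i, j)) (n - u) else T (t, i, j))"
    unfolding T'_def tab_snoc T_def[symmetric] using vx by (simp add: upd_apply x c_def)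
  have mono: "\<And>p. p \<in> D3 n L \<Longrightarrow> T p \<le> T' p"
    using T'eq by fastforce
  have i1: "inv1 n L \<rho> w (xs @ [x]) T'"
    unfolding inv1_def
  proof (intro allI impI)
    fix i j assume ij: "i < n" "j < L" "0 < T' (0, i, j)"
    have D: "(0, i, j) \<in> D3 n L" using ij unfolding D3_def by auto
    show "(i, T' (0, i, j) - 1) \<in> set (xs @ [x]) \<and> cls \<rho> (w (i, T' (0, i, j) - 1)) = j"
    proof (cases "i = u \<and> j = c \<and> T (0, i, j) < Suc v")
      case True
      then have "T' (0, i, j) = Suc v" using T'eq[OF D] by (auto simp: max_def)
      then show ?thesis using True x c_def by simp
    next
      case False
      then have "T' (0, i, j) = T (0, i, j)" using T'eq[OF D] by auto
      then show ?thesis using IH(1) ij unfolding inv1_def by auto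
    qed
  qed
  have i2: "inv2 n L \<rho> w (xs @ [x]) T'"
    unfolding inv2_def
  proof (intro allI impI)
    fix i j assume ij: "i < n" "j < L" "0 < T' (1, i, j)"
    have D: "(1, i, j) \<in> D3 n L" using ij unfolding D3_def by auto
    show "(n - T' (1, i, j), i) \<in> set (xs @ [x]) \<and> cls \<rho> (w (n - T' (1, i, j), i)) = j"
    proof (cases "i = v \<and> j = c \<and> T (1, i, j) < n - u")
      case True
      then have "T' (1, i, j) = n - u" using T'eq[OF D] by (auto simp: max_def)
      then have "n - T' (1, i, j) = u" using vx by simp
      then show ?thesis using True x c_def by simp
    next
      case False
      then have "T' (1, i, j) = T (1, i, j)" using T'eq[OF D] by auto
      then show ?thesis using IH(2) ij unfolding inv2_def by auto
    qed
  qed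
  have i3: "inv3 n \<rho> w (xs @ [x]) T'"
    unfolding inv3_def
  proof
    fix e assume e: "e \<in> set (xs @ [x])"
    show "Suc (snd e) \<le> T' (0, fst e, cls \<rho> (w e)) \<and> n - fst e \<le> T' (1, snd e, cls \<rho> (w e))"
    proof (cases "e \<in> set xs")
      case True
      have ve: "fst e < snd e" "snd e < n" "cls \<rho> (w e) < L" using vxs True unfolding valid_def by auto
      have "(0, fst e, cls \<rho> (w e)) \<in> D3 n L" "(1, snd e, cls \<rho> (w e)) \<in> D3 n L"
        using ve unfolding D3_def by auto
      then show ?thesis using mono IH(3) True unfolding inv3_def by (meson le_trans)
    next
      case False
      then have "e = x" using e by simp
      have "(0, u, c) \<in> D3 n L" "(1, v, c) \<in> D3 n L" using vx unfolding D3_def by auto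
      then show ?thesis using T'eq \<open>e = x\<close> x c_def by simp
    qed
  qed
  show ?case using i1 i2 i3 T'_def by simp
qed



definition Q :: "nat \<Rightarrow> nat \<Rightarrow> (nat \<times> nat \<times> nat \<Rightarrow> nat) \<Rightarrow> ((nat \<times> nat) \<times> nat) set" where
  "Q n L T = (\<lambda>(i, j). ((i, T (0, i, j) - 1), j)) ` {(i, j). i < n \<and> j < L \<and> 0 < T (0, i, j)}
           \<union> (\<lambda>(i, j). ((n - T (1, i, j), i), j)) ` {(i, j). i < n \<and> j < L \<and> 0 < T (1, i, j)}"

lemma finite_Q: "finite (Q n L T)"
proof -
  have "Q n L T \<subseteq> (\<lambda>(i, j). ((i, T (0, i, j) - 1), j)) ` ({..<n} \<times> {..<L})
           \<union> (\<lambda>(i, j). ((n - T (1, i, j), i), j)) ` ({..<n} \<times> {..<L})"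
    unfolding Q_def by (intro Un_mono image_mono) auto
  then show ?thesis by (rule finite_subset) auto
qed

definition cost :: "real \<Rightarrow> ((nat \<times> nat) \<times> nat) set \<Rightarrow> real" where
  "cost \<rho> P = (\<Sum>p\<in>P. ubc \<rho> (snd p))"

definition outT :: "nat \<Rightarrow> nat \<Rightarrow> real \<Rightarrow> (nat \<times> nat \<times> nat \<Rightarrow> nat) \<Rightarrow> (nat \<times> nat) set" where
  "outT n L \<rho> T = fst ` arg_min_on (cost \<rho>) {P. P \<subseteq> Q n L T \<and> three_edge_connected n (fst ` P)}"

lemma Q_props:
  assumes "valid n L \<rho> w xs" "p \<in> Q n L (tab n L \<rho> w xs)"
  shows "fst p \<in> set xs \<and> snd p = cls \<rho> (w (fst p))"
proof -
  define T where "T = tab n L \<rho> w xs"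
  have ti: "inv1 n L \<rho> w xs T \<and> inv2 n L \<rho> w xs T \<and> inv3 n \<rho> w xs T"
    unfolding T_def by (rule tab_inv[OF assms(1)])
  have i1: "inv1 n L \<rho> w xs T" using ti by (rule conjunct1)
  have i2: "inv2 n L \<rho> w xs T" using ti by blast
  have pQ: "p \<in> Q n L T" using assms(2) T_def by simp
  show ?thesis
  proof (cases "p \<in> (\<lambda>(i, j). ((i, T (0, i, j) - 1), j)) ` {(i, j). i < n \<and> j < L \<and> 0 < T (0, i, j)}")
    case True
    then obtain q where q: "q \<in> {(i, j). i < n \<and> j < L \<and> 0 < T (0, i, j)}" "p = (\<lambda>(i, j). ((i, T (0, i, j) - 1), j)) q"
      by (rule imageE) simp
    obtain i j where ij: "q = (i, j)" by (cases q)
    have c: "i < n" "j < L" "0 < T (0, i, j)" using q(1) ij by auto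
    have p: "p = ((i, T (0, i, j) - 1), j)" using q(2) ij by simp
    have "(i, T (0, i, j) - 1) \<in> set xs \<and> cls \<rho> (w (i, T (0, i, j) - 1)) = j"
      using i1 c unfolding inv1_def by blast
    then show ?thesis using p by simp
  next
    case False
    then have "p \<in> (\<lambda>(i, j). ((n - T (1, i, j), i), j)) ` {(i, j). i < n \<and> j < L \<and> 0 < T (1, i, j)}"
      using pQ unfolding Q_def by blast
    then obtain q where q: "q \<in> {(i, j). i < n \<and> j < L \<and> 0 < T (1, i, j)}" "p = (\<lambda>(i, j). ((n - T (1, i, j), i), j)) q"
      by (rule imageE) simp
    obtain i j where ij: "q = (i, j)" by (cases q)
    have c: "i < n" "j < L" "0 < T (1, i, j)" using q(1) ij by auto
    have p: "p = ((n - T (1, i, j), i), j)" using q(2) ij by simp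
    have "(n - T (1, i, j), i) \<in> set xs \<and> cls \<rho> (w (n - T (1, i, j), i)) = j"
      using i2 c unfolding inv2_def by blast
    then show ?thesis using p by simp
  qed
qed

lemma approx:
  assumes v: "valid n L \<rho> w xs" and r: "\<rho> > 1" and n: "n \<ge> 1"
  and ex: "\<exists>S. feasible_aug n (set xs) S"
  shows "feasible_aug n (set xs) (outT n L \<rho> (tab n L \<rho> w xs)) \<and>
    real (weight w (outT n L \<rho> (tab n L \<rho> w xs))) \<le> 2 * \<rho> * real (opt_aug n (set xs) w)"
proof -
  define T where "T = tab n L \<rho> w xs"
  have i3: "inv3 n \<rho> w xs T" using tab_inv[OF v] T_def by auto
  define F where "F = {S. feasible_aug n (set xs) S}"
  have finF: "finite F" unfolding F_def feasible_aug_def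
    by (rule finite_subset[of _ "Pow (set xs)"]) auto
  have neF: "F \<noteq> {}" using ex F_def by auto
  have "opt_aug n (set xs) w \<in> weight w ` F" unfolding opt_aug_def F_def[symmetric]
    using finF neF by (intro Min_in) auto
  then obtain Ss where Ss: "Ss \<in> F" "weight w Ss = opt_aug n (set xs) w" by auto
  have Ssx: "Ss \<subseteq> set xs" and Ss3: "three_edge_connected n Ss"
    using Ss(1) unfolding F_def feasible_aug_def by auto
  have finSs: "finite Ss" using Ssx finite_subset by blast
  define c where "c = (\<lambda>e. cls \<rho> (w e))"
  define f1 where "f1 = (\<lambda>e. ((fst e, T (0, fst e, c e) - 1), c e))"
  define f2 where "f2 = (\<lambda>e. ((n - T (1, snd e, c e), snd e), c e))"
  define P' where "P' = f1 ` Ss \<union> f2 ` Ss"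
  have vSs: "\<And>e. e \<in> Ss \<Longrightarrow> fst e < snd e \<and> snd e < n \<and> c e < L"
    using v Ssx unfolding valid_def c_def by auto
  have i3e: "\<And>e. e \<in> Ss \<Longrightarrow> Suc (snd e) \<le> T (0, fst e, c e) \<and> n - fst e \<le> T (1, snd e, c e)"
    using i3 Ssx unfolding inv3_def c_def by auto
  have P'Q: "P' \<subseteq> Q n L T"
  proof
    fix p assume "p \<in> P'"
    then consider e where "e \<in> Ss" "p = f1 e" | e where "e \<in> Ss" "p = f2 e" unfolding P'_def by auto
    then show "p \<in> Q n L T"
    proof cases
      case 1
      have "(fst e, c e) \<in> {(i, j). i < n \<and> j < L \<and> 0 < T (0, i, j)}"
        using vSs[OF 1(1)] i3e[OF 1(1)] by auto
      then show ?thesis unfolding Q_def 1 f1_def by (intro UnI1) (auto intro!: image_eqI[of _ _ "(fst e, c e)"])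
    next
      case 2
      have "(snd e, c e) \<in> {(i, j). i < n \<and> j < L \<and> 0 < T (1, i, j)}"
        using vSs[OF 2(1)] i3e[OF 2(1)] by auto
      then show ?thesis unfolding Q_def 2 f2_def by (intro UnI2) (auto intro!: image_eqI[of _ _ "(snd e, c e)"])
    qed
  qed
  have QP: "\<And>p. p \<in> Q n L T \<Longrightarrow> fst p \<in> set xs \<and> snd p = cls \<rho> (w (fst p))"
    using Q_props[OF v] T_def by auto
  have P'3: "three_edge_connected n (fst ` P')"
  proof (rule replace_3ec[OF n Ss3])
    show "finite (fst ` P')" unfolding P'_def using finSs by auto
    show "\<forall>e\<in>Ss. fst e < snd e \<and> snd e < n" using vSs by auto
    show "\<forall>e\<in>fst ` P'. fst e < n \<and> snd e < n"
    proof
      fix e assume "e \<in> fst ` P'"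
      then have "e \<in> set xs" using P'Q QP by auto
      then show "fst e < n \<and> snd e < n" using v unfolding valid_def by auto
    qed
    show "\<forall>e\<in>Ss. \<exists>v'. (fst e, v') \<in> fst ` P' \<and> snd e \<le> v'"
    proof
      fix e assume e: "e \<in> Ss"
      have "(fst e, T (0, fst e, c e) - 1) \<in> fst ` P'" unfolding P'_def f1_def using e by force
      moreover have "snd e \<le> T (0, fst e, c e) - 1" using i3e[OF e] by arith
      ultimately show "\<exists>v'. (fst e, v') \<in> fst ` P' \<and> snd e \<le> v'" by blast
    qed
    show "\<forall>e\<in>Ss. \<exists>u'. (u', snd e) \<in> fst ` P' \<and> u' \<le> fst e"
    proof
      fix e assume e: "e \<in> Ss"
      have "(n - T (1, snd e, c e), snd e) \<in> fst ` P'" unfolding P'_def f2_def using e by force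
      moreover have "n - T (1, snd e, c e) \<le> fst e" using i3e[OF e] by arith
      ultimately show "\<exists>u'. (u', snd e) \<in> fst ` P' \<and> u' \<le> fst e" by blast
    qed
  qed
  define Fam where "Fam = {P. P \<subseteq> Q n L T \<and> three_edge_connected n (fst ` P)}"
  have finFam: "finite Fam" unfolding Fam_def
    by (rule finite_subset[of _ "Pow (Q n L T)"]) (auto simp: finite_Q)
  have P'Fam: "P' \<in> Fam" unfolding Fam_def using P'Q P'3 by auto
  then have neFam: "Fam \<noteq> {}" by auto
  define P0 where "P0 = arg_min_on (cost \<rho>) Fam"
  have P0F: "P0 \<in> Fam" unfolding P0_def by (rule arg_min_if_finite(1)[OF finFam neFam])
  have P0min: "cost \<rho> P0 \<le> cost \<rho> P'"
    using arg_min_if_finite(2)[OF finFam neFam, of "cost \<rho>"] P'Fam unfolding P0_def by force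
  have out: "outT n L \<rho> T = fst ` P0" unfolding outT_def P0_def Fam_def by simp
  have P0Q: "P0 \<subseteq> Q n L T" and P03: "three_edge_connected n (fst ` P0)" using P0F Fam_def by auto
  have finP0: "finite P0" using P0Q finite_Q finite_subset by blast
  have feas: "feasible_aug n (set xs) (fst ` P0)"
    unfolding feasible_aug_def using P03 P0Q QP by auto
  have "real (weight w (fst ` P0)) = (\<Sum>e\<in>fst ` P0. real (w e))" unfolding weight_def by simp
  also have "\<dots> \<le> (\<Sum>p\<in>P0. real (w (fst p)))"
    using sum_image_le[OF finP0, of "\<lambda>e. real (w e)" fst] by (simp add: comp_def)
  also have "\<dots> \<le> (\<Sum>p\<in>P0. ubc \<rho> (snd p))"
  proof (rule sum_mono)
    fix p assume "p \<in> P0"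
    then have "snd p = cls \<rho> (w (fst p))" using QP P0Q by blast
    then show "real (w (fst p)) \<le> ubc \<rho> (snd p)" using cls_props[OF r] by simp
  qed
  also have "\<dots> = cost \<rho> P0" unfolding cost_def by simp
  also have "\<dots> \<le> cost \<rho> P'" by (rule P0min)
  also have "\<dots> \<le> cost \<rho> (f1 ` Ss) + cost \<rho> (f2 ` Ss)"
  proof -
    have "cost \<rho> P' + cost \<rho> (f1 ` Ss \<inter> f2 ` Ss) = cost \<rho> (f1 ` Ss) + cost \<rho> (f2 ` Ss)"
      unfolding cost_def P'_def using finSs by (intro sum.union_inter) auto
    moreover have "cost \<rho> (f1 ` Ss \<inter> f2 ` Ss) \<ge> 0" unfolding cost_def using ubc_nonneg[OF r]
      by (intro sum_nonneg) auto
    ultimately show ?thesis by linarith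
  qed
  also have "\<dots> \<le> (\<Sum>e\<in>Ss. ubc \<rho> (c e)) + (\<Sum>e\<in>Ss. ubc \<rho> (c e))"
  proof (rule add_mono)
    show "cost \<rho> (f1 ` Ss) \<le> (\<Sum>e\<in>Ss. ubc \<rho> (c e))"
      unfolding cost_def using sum_image_le[OF finSs, of "\<lambda>p. ubc \<rho> (snd p)" f1] ubc_nonneg[OF r]
      by (simp add: comp_def f1_def)
    show "cost \<rho> (f2 ` Ss) \<le> (\<Sum>e\<in>Ss. ubc \<rho> (c e))"
      unfolding cost_def using sum_image_le[OF finSs, of "\<lambda>p. ubc \<rho> (snd p)" f2] ubc_nonneg[OF r]
      by (simp add: comp_def f2_def)
  qed
  also have "\<dots> \<le> (\<Sum>e\<in>Ss. \<rho> * real (w e)) + (\<Sum>e\<in>Ss. \<rho> * real (w e))"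
    using cls_props[OF r] unfolding c_def by (intro add_mono sum_mono) auto
  also have "\<dots> = 2 * (\<rho> * (\<Sum>e\<in>Ss. real (w e)))"
    by (simp only: sum_distrib_left[symmetric])
  also have "\<dots> = 2 * \<rho> * real (weight w Ss)"
    unfolding weight_def of_nat_sum by (simp only: mult.assoc)
  finally have A: "real (weight w (fst ` P0)) \<le> 2 * \<rho> * real (weight w Ss)" .
  show ?thesis unfolding T_def[symmetric] out Ss(2)[symmetric] using feas A by (rule conjI)
qed



lemma alg_exists:
  fixes \<epsilon> :: real and n W :: nat
  assumes e: "0 < \<epsilon>" "\<epsilon> \<le> 1" and n: "n \<ge> 3"
  shows "\<exists>(init::nat list) (step::nat list \<Rightarrow> nat \<times> nat \<times> nat \<Rightarrow> nat list)
          (out::nat list \<Rightarrow> (nat \<times> nat) set).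
        \<forall>(xs::(nat \<times> nat) list) (w::nat \<times> nat \<Rightarrow> nat).
          distinct xs \<and> (\<forall>e\<in>set xs. is_link n e) \<and> (\<forall>e\<in>set xs. w e \<le> W) \<longrightarrow>
            (\<forall>m\<le>length xs.
               real (length (run_stream step init w (take m xs)))
                 \<le> 15 * real n / \<epsilon> * log 2 (real (min W n) + 2)
               \<and> (\<forall>a\<in>set (run_stream step init w (take m xs)). a < (n + W + 2) ^ 1))
            \<and> ((\<exists>S. feasible_aug n (set xs) S) \<longrightarrow>
                 feasible_aug n (set xs) (out (run_stream step init w xs))
                 \<and> real (weight w (out (run_stream step init w xs)))
                     \<le> (2 + \<epsilon>) * real (opt_aug n (set xs) w))"
proof -
  define \<rho> where "\<rho> = 1 + \<epsilon> / 2"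
  have r1: "\<rho> > 1" using e \<rho>_def by simp
  define L where "L = nat \<lceil>ln (real W) / ln (1 + \<epsilon>/2)\<rceil> + 2"
  define r where "r = nat \<lceil>2 * real n * real L * ln (real n + 1) / ln (real n + real W + 2)\<rceil>"
  have mb1: "real r \<le> 15 * real n / \<epsilon> * log 2 (real (min W n) + 2)"
    and mb2: "(n + 1) ^ (2 * n * L) \<le> (n + W + 2) ^ r"
    using mem_bound[OF e n] unfolding L_def r_def by auto
  define TS where "TS = PiE (D3 n L) (\<lambda>_. {..n})"
  define LS where "LS = {xs :: nat list. set xs \<subseteq> {..<n + W + 2} \<and> length xs = r}"
  have finD: "finite (D3 n L)" unfolding D3_def by simp
  have cD: "card (D3 n L) = 2 * n * L" unfolding D3_def by (simp add: card_cartesian_product)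
  have cTS: "card TS = (n + 1) ^ (2 * n * L)" unfolding TS_def using finD cD by (simp add: card_PiE)
  have cLS: "card LS = (n + W + 2) ^ r" unfolding LS_def by (simp add: card_lists_length_eq)
  have finTS: "finite TS" unfolding TS_def using finD by (simp add: finite_PiE)
  have finLS: "finite LS" unfolding LS_def by (rule finite_lists_length_eq) simp
  obtain enc where enc: "enc ` TS \<subseteq> LS" "inj_on enc TS"
    using card_le_inj[OF finTS finLS] cTS cLS mb2 by auto
  define dec where "dec = inv_into TS enc"
  have decenc: "\<And>T. T \<in> TS \<Longrightarrow> dec (enc T) = T" unfolding dec_def using enc(2) by simp
  define init where "init = enc (T0 n L)"
  define step where "step = (\<lambda>s x. enc (upd n L \<rho> (dec s) x))"
  define out where "out = (\<lambda>s. outT n L \<rho> (dec s))"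
  have run: "\<And>w xs. run_stream step init w xs = enc (tab n L \<rho> w xs)"
  proof -
    fix w :: "nat \<times> nat \<Rightarrow> nat" and xs :: "(nat \<times> nat) list"
    show "run_stream step init w xs = enc (tab n L \<rho> w xs)"
    proof (induction xs rule: rev_induct)
      case Nil then show ?case unfolding run_stream_def init_def tab_Nil by simp
    next
      case (snoc x xs)
      have d: "dec (run_stream step init w xs) = tab n L \<rho> w xs"
        using snoc.IH decenc tab_PiE unfolding TS_def by simp
      have "run_stream step init w (xs @ [x]) = step (run_stream step init w xs) (fst x, snd x, w x)"
        unfolding run_stream_def by simp
      also have "\<dots> = enc (upd n L \<rho> (dec (run_stream step init w xs)) (fst x, snd x, w x))"
        by (simp add: step_def)
      also have "\<dots> = enc (upd n L \<rho> (tab n L \<rho> w xs) (fst x, snd x, w x))"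
        by (simp only: d)
      also have "\<dots> = enc (tab n L \<rho> w (xs @ [x]))" by (simp add: tab_snoc)
      finally show ?case .
    qed
  qed
  have inLS: "\<And>w xs. run_stream step init w xs \<in> LS"
  proof -
    fix w xs
    have "tab n L \<rho> w xs \<in> TS" unfolding TS_def by (rule tab_PiE)
    then have "enc (tab n L \<rho> w xs) \<in> LS" using enc(1) by blast
    then show "run_stream step init w xs \<in> LS" by (simp only: run)
  qed
  have vgen: "\<And>xs w. (\<forall>e\<in>set xs. is_link n e) \<Longrightarrow> (\<forall>e\<in>set xs. w e \<le> W) \<Longrightarrow> valid n L \<rho> w xs"
    unfolding valid_def
  proof
    fix xs :: "(nat \<times> nat) list" and w :: "nat \<times> nat \<Rightarrow> nat" and e
    assume A: "\<forall>e\<in>set xs. is_link n e" "\<forall>e\<in>set xs. w e \<le> W" and "e \<in> set xs"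
    then have "is_link n e" "w e \<le> W" by auto
    moreover have "cls \<rho> (w e) < L" unfolding L_def \<rho>_def
      using cls_bound[OF _ \<open>w e \<le> W\<close>, of "1 + \<epsilon>/2"] e by simp
    ultimately show "fst e < snd e \<and> snd e < n \<and> cls \<rho> (w e) < L" unfolding is_link_def by auto
  qed
  have apgen: "\<And>xs w. valid n L \<rho> w xs \<Longrightarrow> (\<exists>S. feasible_aug n (set xs) S) \<Longrightarrow>
      feasible_aug n (set xs) (out (run_stream step init w xs)) \<and>
      real (weight w (out (run_stream step init w xs))) \<le> (2 + \<epsilon>) * real (opt_aug n (set xs) w)"
  proof -
    fix xs :: "(nat \<times> nat) list" and w :: "nat \<times> nat \<Rightarrow> nat"
    assume v: "valid n L \<rho> w xs" and ex: "\<exists>S. feasible_aug n (set xs) S"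
    have outeq: "out (run_stream step init w xs) = outT n L \<rho> (tab n L \<rho> w xs)"
      unfolding out_def run using decenc tab_PiE TS_def by simp
    have ap: "feasible_aug n (set xs) (outT n L \<rho> (tab n L \<rho> w xs)) \<and>
      real (weight w (outT n L \<rho> (tab n L \<rho> w xs))) \<le> 2 * \<rho> * real (opt_aug n (set xs) w)"
      using approx[OF v r1 _ ex] n by simp
    have two: "2 * \<rho> = 2 + \<epsilon>" unfolding \<rho>_def by simp
    show "feasible_aug n (set xs) (out (run_stream step init w xs)) \<and>
      real (weight w (out (run_stream step init w xs))) \<le> (2 + \<epsilon>) * real (opt_aug n (set xs) w)"
      unfolding outeq two[symmetric] by (rule ap)
  qed
  show ?thesis
  proof (intro exI[of _ init] exI[of _ step] exI[of _ out] allI impI conjI)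
    fix xs :: "(nat \<times> nat) list" and w :: "nat \<times> nat \<Rightarrow> nat" and m
    have "run_stream step init w (take m xs) \<in> LS" by (rule inLS)
    then have "length (run_stream step init w (take m xs)) = r" unfolding LS_def by auto
    then show "real (length (run_stream step init w (take m xs))) \<le> 15 * real n / \<epsilon> * log 2 (real (min W n) + 2)"
      using mb1 by simp
  next
    fix xs :: "(nat \<times> nat) list" and w :: "nat \<times> nat \<Rightarrow> nat" and m
    have "run_stream step init w (take m xs) \<in> LS" by (rule inLS)
    then have "set (run_stream step init w (take m xs)) \<subseteq> {..<n + W + 2}" unfolding LS_def by auto
    then show "\<forall>a\<in>set (run_stream step init w (take m xs)). a < (n + W + 2) ^ 1" by auto
  next
    fix xs :: "(nat \<times> nat) list" and w :: "nat \<times> nat \<Rightarrow> nat"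
    assume A: "distinct xs \<and> (\<forall>e\<in>set xs. is_link n e) \<and> (\<forall>e\<in>set xs. w e \<le> W)"
      and ex: "\<exists>S. feasible_aug n (set xs) S"
    have v: "valid n L \<rho> w xs" using A vgen by blast
    show "feasible_aug n (set xs) (out (run_stream step init w xs))" using apgen[OF v ex] by (rule conjunct1)
  next
    fix xs :: "(nat \<times> nat) list" and w :: "nat \<times> nat \<Rightarrow> nat"
    assume A: "distinct xs \<and> (\<forall>e\<in>set xs. is_link n e) \<and> (\<forall>e\<in>set xs. w e \<le> W)"
      and ex: "\<exists>S. feasible_aug n (set xs) S"
    have v: "valid n L \<rho> w xs" using A vgen by blast
    show "real (weight w (out (run_stream step init w xs))) \<le> (2 + \<epsilon>) * real (opt_aug n (set xs) w)"
      using apgen[OF v ex] by (rule conjunct2)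
  qed
qed

theorem mainTheorem3:
  shows "\<exists>(C::real) (k::nat). C > 0 \<and>
    (\<forall>(\<epsilon>::real) (n::nat) (W::nat). 0 < \<epsilon> \<and> \<epsilon> \<le> 1 \<and> n \<ge> 3 \<longrightarrow>
      (\<exists>(init::nat list) (step::nat list \<Rightarrow> nat \<times> nat \<times> nat \<Rightarrow> nat list)
          (out::nat list \<Rightarrow> (nat \<times> nat) set).
        \<forall>(xs::(nat \<times> nat) list) (w::nat \<times> nat \<Rightarrow> nat).
          distinct xs \<and> (\<forall>e\<in>set xs. is_link n e) \<and> (\<forall>e\<in>set xs. w e \<le> W) \<longrightarrow>
            (\<forall>m\<le>length xs.
               real (length (run_stream step init w (take m xs)))
                 \<le> C * real n / \<epsilon> * log 2 (real (min W n) + 2)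
               \<and> (\<forall>a\<in>set (run_stream step init w (take m xs)). a < (n + W + 2) ^ k))
            \<and> ((\<exists>S. feasible_aug n (set xs) S) \<longrightarrow>
                 feasible_aug n (set xs) (out (run_stream step init w xs))
                 \<and> real (weight w (out (run_stream step init w xs)))
                     \<le> (2 + \<epsilon>) * real (opt_aug n (set xs) w))))"
proof (intro exI[of _ "15::real"] exI[of _ "1::nat"] conjI allI impI)
  show "(15::real) > 0" by simp
  fix \<epsilon> :: real and n W :: nat
  assume A: "0 < \<epsilon> \<and> \<epsilon> \<le> 1 \<and> 3 \<le> n"
  then have A1: "0 < \<epsilon>" and A2: "\<epsilon> \<le> 1" and A3: "3 \<le> n" by auto
  show "\<exists>(init::nat list) (step::nat list \<Rightarrow> nat \<times> nat \<times> nat \<Rightarrow> nat list)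
          (out::nat list \<Rightarrow> (nat \<times> nat) set).
        \<forall>(xs::(nat \<times> nat) list) (w::nat \<times> nat \<Rightarrow> nat).
          distinct xs \<and> (\<forall>e\<in>set xs. is_link n e) \<and> (\<forall>e\<in>set xs. w e \<le> W) \<longrightarrow>
            (\<forall>m\<le>length xs.
               real (length (run_stream step init w (take m xs)))
                 \<le> 15 * real n / \<epsilon> * log 2 (real (min W n) + 2)
               \<and> (\<forall>a\<in>set (run_stream step init w (take m xs)). a < (n + W + 2) ^ 1))
            \<and> ((\<exists>S. feasible_aug n (set xs) S) \<longrightarrow>
                 feasible_aug n (set xs) (out (run_stream step init w xs))
                 \<and> real (weight w (out (run_stream step init w xs)))
                     \<le> (2 + \<epsilon>) * real (opt_aug n (set xs) w))"
    by (rule alg_exists[OF A1 A2 A3])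
qed

end
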